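(* Let $(T_i)_{i\ge 0}$ be a sequence of pairwise distinct trees in $\mathcal{T}_3$. Then the average subtree density $D(T_i)$ tends to $\frac{1}{2}$ as $i\to\infty$ if and only if the proportion of vertices of $T_i$ that are leaves tends to $1$.
   Context: All trees are finite. A leaf is a vertex of degree at most 1; an internal vertex is a vertex of degree at least 2. $\mathcal{T}_3$ is the set of trees that have at least one internal vertex and in which every internal vertex has degree at least 3 (series-reduced trees). A subtree of a tree $T$ is a nonempty set of vertices of $T$ inducing a connected subgraph (equivalently a subtree). $\mu(T)$ is the average number of vertices of a subtree of $T$, taken uniformly over all subtrees, and the average subtree density is $D(T)=\mu(T)/n(T)$, where $n(T)$ is the number of vertices of $T$. *)

theory Defs
  imports Complex_Main
begin

text \<open>A (finite, simple, undirected) graph is a vertex set together with a symmetric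
  edge relation; vertices are natural numbers (every finite tree has an isomorphic
  copy on nat).\<close>
type_synonym graph = "nat set \<times> (nat \<times> nat) set"

definition verts :: "graph \<Rightarrow> nat set" where "verts G = fst G"
definition edges :: "graph \<Rightarrow> (nat \<times> nat) set" where "edges G = snd G"

definition is_graph :: "graph \<Rightarrow> bool" where
  "is_graph G \<longleftrightarrow> finite (verts G) \<and> edges G \<subseteq> verts G \<times> verts G \<and>
     sym (edges G) \<and> (\<forall>x. (x, x) \<notin> edges G)"

definition induces_connected :: "graph \<Rightarrow> nat set \<Rightarrow> bool" where
  "induces_connected G S \<longleftrightarrow>
     (\<forall>x\<in>S. \<forall>y\<in>S. (x, y) \<in> (edges G \<inter> (S \<times> S))\<^sup>*)"

definition num_edges :: "graph \<Rightarrow> nat" where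
  "num_edges G = card {e. \<exists>x y. e = {x, y} \<and> (x, y) \<in> edges G}"

definition is_tree :: "graph \<Rightarrow> bool" where
  "is_tree G \<longleftrightarrow> is_graph G \<and> verts G \<noteq> {} \<and> induces_connected G (verts G) \<and>
     num_edges G = card (verts G) - 1"

definition degree :: "graph \<Rightarrow> nat \<Rightarrow> nat" where
  "degree G v = card {u. (v, u) \<in> edges G}"

definition leaves :: "graph \<Rightarrow> nat set" where
  "leaves G = {v \<in> verts G. degree G v \<le> 1}"

definition internal_verts :: "graph \<Rightarrow> nat set" where
  "internal_verts G = {v \<in> verts G. degree G v \<ge> 2}"

definition T3 :: "graph \<Rightarrow> bool" where
  "T3 G \<longleftrightarrow> is_tree G \<and> internal_verts G \<noteq> {} \<and> (\<forall>v\<in>internal_verts G. degree G v \<ge> 3)"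

definition subtrees :: "graph \<Rightarrow> nat set set" where
  "subtrees G = {S. S \<subseteq> verts G \<and> S \<noteq> {} \<and> induces_connected G S}"

definition mean_subtree_order :: "graph \<Rightarrow> real" where
  "mean_subtree_order G = (\<Sum>S\<in>subtrees G. real (card S)) / real (card (subtrees G))"

definition avg_subtree_density :: "graph \<Rightarrow> real" where
  "avg_subtree_density G = mean_subtree_order G / real (card (verts G))"

definition graph_iso :: "graph \<Rightarrow> graph \<Rightarrow> bool" where
  "graph_iso G H \<longleftrightarrow> (\<exists>f. bij_betw f (verts G) (verts H) \<and>
     (\<forall>x\<in>verts G. \<forall>y\<in>verts G. (x, y) \<in> edges G \<longleftrightarrow> (f x, f y) \<in> edges H))"

end

theory Submission
  imports Defs
begin



lemma remove_low_deg:
  assumes fin: "\<And>z. z \<in> Z \<Longrightarrow> finite {u. (z,u) \<in> edges G}"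
    and deg: "\<And>z. z \<in> Z \<Longrightarrow> card {u. (z,u) \<in> edges G} \<le> 1"
    and sym: "sym (edges G)"
    and conn: "induces_connected G S"
  shows "induces_connected G (S - Z)"
  unfolding induces_connected_def
proof (intro ballI)
  fix x y assume x: "x \<in> S - Z" and y: "y \<in> S - Z"
  let ?E = "edges G \<inter> S \<times> S" and ?F = "edges G \<inter> (S - Z) \<times> (S - Z)"
  have xy: "(x,y) \<in> ?E\<^sup>*" using conn x y unfolding induces_connected_def by auto
  have "(y \<notin> Z \<longrightarrow> (x,y) \<in> ?F\<^sup>*) \<and> (y \<in> Z \<longrightarrow> (\<exists>z. (x,z) \<in> ?F\<^sup>* \<and> z \<notin> Z \<and> z \<in> S \<and> (y,z) \<in> edges G))"
    using xy
  proof (induction rule: rtrancl_induct)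
    case base
    then show ?case using x by auto
  next
    case (step y w)
    show ?case
    proof (cases "y \<in> Z")
      case False
      with step have p: "(x,y) \<in> ?F\<^sup>*" by auto
      show ?thesis
      proof (cases "w \<in> Z")
        case False
        have "(y,w) \<in> ?F" using step(2) False \<open>y \<notin> Z\<close> by auto
        then show ?thesis using p False by (meson rtrancl_into_rtrancl)
      next
        case True
        have "(w,y) \<in> edges G" using step(2) sym by (auto dest: symD)
        then show ?thesis using p True \<open>y \<notin> Z\<close> step(2) by auto
      qed
    next
      case True
      with step obtain z where z: "(x,z) \<in> ?F\<^sup>*" "z \<notin> Z" "z \<in> S" "(y,z) \<in> edges G" by auto
      have "w \<in> {u. (y,u) \<in> edges G}" "z \<in> {u. (y,u) \<in> edges G}" using step(2) z(4) by auto
      then have "w = z" using deg[OF True] card_le_Suc0_iff_eq[OF fin[OF True]]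
        by auto
      then show ?thesis using z by auto
    qed
  qed
  then show "(x,y) \<in> ?F\<^sup>*" using y by auto
qed

lemma ic_mono_rel:
  assumes "(x,y) \<in> (edges G \<inter> A \<times> A)\<^sup>*" "A \<subseteq> B"
  shows "(x,y) \<in> (edges G \<inter> B \<times> B)\<^sup>*"
  using assms(1) rtrancl_mono[of "edges G \<inter> A \<times> A" "edges G \<inter> B \<times> B"] assms(2) by blast

lemma rtrancl_sym_rev:
  assumes "sym (edges G)" "(x,y) \<in> (edges G \<inter> A \<times> A)\<^sup>*"
  shows "(y,x) \<in> (edges G \<inter> A \<times> A)\<^sup>*"
proof -
  have "sym (edges G \<inter> A \<times> A)" using assms(1) by (auto simp: sym_def)
  then show ?thesis using assms(2)
    by (metis rtrancl_converseI sym_conv_converse_eq)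
qed

lemma ic_union_edge:
  assumes A: "induces_connected G A" and B: "induces_connected G B"
    and ab: "a \<in> A" "b \<in> B" "(a,b) \<in> edges G" and sym: "sym (edges G)"
  shows "induces_connected G (A \<union> B)"
  unfolding induces_connected_def
proof (intro ballI)
  fix x y assume x: "x \<in> A \<union> B" and y: "y \<in> A \<union> B"
  let ?U = "edges G \<inter> (A \<union> B) \<times> (A \<union> B)"
  have inA: "(u,v) \<in> ?U\<^sup>*" if "u \<in> A" "v \<in> A" for u v
  proof -
    have "(u,v) \<in> (edges G \<inter> A \<times> A)\<^sup>*" using A that unfolding induces_connected_def by auto
    then show ?thesis by (rule ic_mono_rel) auto
  qed
  have inB: "(u,v) \<in> ?U\<^sup>*" if "u \<in> B" "v \<in> B" for u v
  proof -
    have "(u,v) \<in> (edges G \<inter> B \<times> B)\<^sup>*" using B that unfolding induces_connected_def by auto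
    then show ?thesis by (rule ic_mono_rel) auto
  qed
  have e1: "(a,b) \<in> ?U\<^sup>*" using ab by auto
  have e2: "(b,a) \<in> ?U\<^sup>*" using ab sym by (auto dest: symD)
  show "(x,y) \<in> ?U\<^sup>*"
  proof (cases "x \<in> A")
    case True
    show ?thesis
    proof (cases "y \<in> A")
      case True
      then show ?thesis using inA \<open>x \<in> A\<close> by blast
    next
      case False
      then have "y \<in> B" using y by auto
      have "(x,a) \<in> ?U\<^sup>*" "(b,y) \<in> ?U\<^sup>*" using inA inB \<open>x \<in> A\<close> \<open>y \<in> B\<close> ab by auto
      then show ?thesis using e1 by (meson rtrancl_trans)
    qed
  next
    case False
    then have xB: "x \<in> B" using x by auto
    show ?thesis
    proof (cases "y \<in> B")
      case True
      then show ?thesis using inB xB by blast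
    next
      case False
      then have "y \<in> A" using y by auto
      have "(x,b) \<in> ?U\<^sup>*" "(a,y) \<in> ?U\<^sup>*" using inA inB xB \<open>y \<in> A\<close> ab by auto
      then show ?thesis using e2 by (meson rtrancl_trans)
    qed
  qed
qed

lemma ic_add_pendants:
  assumes A: "induces_connected G A"
    and Q: "\<And>q. q \<in> Q \<Longrightarrow> \<exists>a\<in>A. (a,q) \<in> edges G" and sym: "sym (edges G)"
  shows "induces_connected G (A \<union> Q)"
  unfolding induces_connected_def
proof (intro ballI)
  fix x y assume x: "x \<in> A \<union> Q" and y: "y \<in> A \<union> Q"
  let ?U = "edges G \<inter> (A \<union> Q) \<times> (A \<union> Q)"
  have inA: "(u,v) \<in> ?U\<^sup>*" if "u \<in> A" "v \<in> A" for u v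
  proof -
    have "(u,v) \<in> (edges G \<inter> A \<times> A)\<^sup>*" using A that unfolding induces_connected_def by auto
    then show ?thesis by (rule ic_mono_rel) auto
  qed
  have toA: "\<exists>a\<in>A. (u,a) \<in> ?U\<^sup>* \<and> (a,u) \<in> ?U\<^sup>*" if "u \<in> A \<union> Q" for u
  proof (cases "u \<in> A")
    case True then show ?thesis by blast
  next
    case False
    then have "u \<in> Q" using that by auto
    then obtain a where a: "a \<in> A" "(a,u) \<in> edges G" using Q by blast
    then have "(u,a) \<in> edges G" using sym by (auto dest: symD)
    then show ?thesis using a \<open>u \<in> Q\<close> by (intro bexI[of _ a]) auto
  qed
  obtain a1 where a1: "a1 \<in> A" "(x,a1) \<in> ?U\<^sup>*" using toA[OF x] by blast
  obtain a2 where a2: "a2 \<in> A" "(a2,y) \<in> ?U\<^sup>*" using toA[OF y] by blast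
  show "(x,y) \<in> ?U\<^sup>*" using a1 a2 inA[OF a1(1) a2(1)] by (meson rtrancl_trans)
qed

lemma dist_inj:
  fixes E :: "('a \<times> 'a) set"
  assumes finV: "finite V" and EV: "E \<subseteq> V \<times> V" and sym: "sym E" and irr: "\<forall>x. (x,x) \<notin> E"
    and RV: "R \<subseteq> V" and reach: "\<And>v. v \<in> V \<Longrightarrow> \<exists>r\<in>R. (r,v) \<in> E\<^sup>*"
  shows "2 * card (V - R) \<le> card (E - R \<times> R)"
proof -
  define d where "d v = (LEAST m. \<exists>r\<in>R. (r,v) \<in> E ^^ m)" for v
  have dP: "\<exists>r\<in>R. (r,v) \<in> E ^^ d v" if vV: "v \<in> V" for v
  proof -
    obtain r where "r \<in> R" "(r,v) \<in> E\<^sup>*" using reach[OF vV] by blast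
    then obtain m where "(r,v) \<in> E ^^ m" using rtrancl_power by blast
    then have "\<exists>m. \<exists>r\<in>R. (r,v) \<in> E ^^ m" using \<open>r \<in> R\<close> by blast
    then show ?thesis unfolding d_def by (rule LeastI_ex)
  qed
  have pex: "\<exists>w. (w,v) \<in> E \<and> d w < d v" if vVR: "v \<in> V - R" for v
  proof -
    obtain r where r: "r \<in> R" "(r,v) \<in> E ^^ d v" using dP vVR by blast
    have "d v \<noteq> 0"
    proof
      assume "d v = 0"
      then have "r = v" using r(2) by simp
      then show False using r(1) vVR by simp
    qed
    then obtain m where m: "d v = Suc m" by (cases "d v") auto
    then obtain w where w: "(r,w) \<in> E ^^ m" "(w,v) \<in> E" using r(2) by auto
    have "d w \<le> m" unfolding d_def using w(1) r(1) by (intro Least_le) blast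
    then show ?thesis using w m by auto
  qed
  define p where "p v = (SOME w. (w,v) \<in> E \<and> d w < d v)" for v
  have pP: "(p v, v) \<in> E \<and> d (p v) < d v" if "v \<in> V - R" for v
    unfolding p_def by (rule someI_ex) (rule pex[OF that])
  define A1 where "A1 = (\<lambda>v. (v, p v)) ` (V - R)"
  define A2 where "A2 = (\<lambda>v. (p v, v)) ` (V - R)"
  have c1: "card A1 = card (V - R)" unfolding A1_def by (rule card_image) (auto simp: inj_on_def)
  have c2: "card A2 = card (V - R)" unfolding A2_def by (rule card_image) (auto simp: inj_on_def)
  have disj: "A1 \<inter> A2 = {}"
  proof -
    { fix v w assume v: "v \<in> V - R" and w: "w \<in> V - R" and eq: "(v, p v) = (p w, w)"
      then have "v = p w" "w = p v" by auto
      then have False using pP[OF v] pP[OF w] by auto }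
    then show ?thesis unfolding A1_def A2_def by auto
  qed
  have sub: "A1 \<union> A2 \<subseteq> E - R \<times> R"
    using pP sym unfolding A1_def A2_def by (auto dest: symD)
  have finE: "finite E" using finV EV by (meson finite_SigmaI finite_subset)
  have "card (A1 \<union> A2) = 2 * card (V - R)"
  proof -
    have "finite A1" "finite A2" using finE sub by (auto intro: finite_subset)
    then have "card (A1 \<union> A2) = card A1 + card A2" using disj by (rule card_Un_disjoint)
    then show ?thesis using c1 c2 by simp
  qed
  moreover have "card (A1 \<union> A2) \<le> card (E - R \<times> R)"
    using sub finE by (intro card_mono) auto
  ultimately show ?thesis by simp
qed




locale sr =
  fixes G :: graph
  assumes T3G: "T3 G"
begin

abbreviation "V \<equiv> verts G"
abbreviation "E \<equiv> edges G"
definition "I = internal_verts G"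
definition "Lf = leaves G"
definition "nbrs v = {u. (v,u) \<in> E}"

lemma isg: "is_graph G" using T3G unfolding T3_def is_tree_def by auto
lemma finV: "finite V" using isg unfolding is_graph_def by auto
lemma EV: "E \<subseteq> V \<times> V" using isg unfolding is_graph_def by auto
lemma symE: "sym E" using isg unfolding is_graph_def by auto
lemma irr: "(x,x) \<notin> E" using isg unfolding is_graph_def by auto
lemma conn: "induces_connected G V" using T3G unfolding T3_def is_tree_def by auto
lemma finE: "finite E" using finV EV by (meson finite_SigmaI finite_subset)
lemma Esym: "(x,y) \<in> E \<Longrightarrow> (y,x) \<in> E" using symE by (auto dest: symD)
lemma EV1: "(x,y) \<in> E \<Longrightarrow> x \<in> V \<and> y \<in> V" using EV by auto

lemma nbrs_sub: "nbrs v \<subseteq> V" using EV unfolding nbrs_def by auto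
lemma fin_nbrs: "finite (nbrs v)" using nbrs_sub finV by (rule finite_subset)
lemma deg_eq: "degree G v = card (nbrs v)" unfolding degree_def nbrs_def by simp

lemma V_split: "V = I \<union> Lf" unfolding I_def Lf_def internal_verts_def leaves_def by auto
lemma I_Lf: "I \<inter> Lf = {}" unfolding I_def Lf_def internal_verts_def leaves_def by auto
lemma IV: "I \<subseteq> V" and LfV: "Lf \<subseteq> V" using V_split by auto
lemma I_deg3: "u \<in> I \<Longrightarrow> 3 \<le> card (nbrs u)"
  using T3G unfolding T3_def I_def by (auto simp: deg_eq)
lemma Lf_deg: "v \<in> Lf \<Longrightarrow> card (nbrs v) \<le> 1"
  unfolding Lf_def leaves_def by (auto simp: deg_eq)
lemma I_ne: "I \<noteq> {}" using T3G unfolding T3_def I_def by auto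
lemma finI: "finite I" and finLf: "finite Lf" using finV IV LfV by (auto intro: finite_subset)

lemma card_V_ge4: "4 \<le> card V"
proof -
  obtain u where u: "u \<in> I" using I_ne by auto
  have "u \<notin> nbrs u" using irr unfolding nbrs_def by auto
  then have "card (insert u (nbrs u)) = Suc (card (nbrs u))" using fin_nbrs by simp
  moreover have "insert u (nbrs u) \<subseteq> V" using u IV nbrs_sub by auto
  ultimately have "Suc (card (nbrs u)) \<le> card V" using card_mono[OF finV] by metis
  then show ?thesis using I_deg3[OF u] by linarith
qed

lemma connV: "x \<in> V \<Longrightarrow> y \<in> V \<Longrightarrow> (x,y) \<in> E\<^sup>*"
  using conn unfolding induces_connected_def
  by (meson Int_lower1 rtrancl_mono subsetD)

lemma has_nbr: assumes "v \<in> V" shows "\<exists>u. (v,u) \<in> E"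
proof -
  have "\<exists>w\<in>V. w \<noteq> v"
  proof (rule ccontr)
    assume "\<not> ?thesis"
    then have "V \<subseteq> {v}" by auto
    then have "card V \<le> card {v}" by (intro card_mono) auto
    then have "card V \<le> 1" by simp
    then show False using card_V_ge4 by simp
  qed
  then obtain w where w: "w \<in> V" "w \<noteq> v" by auto
  have "(v,w) \<in> E\<^sup>*" using connV assms w by auto
  then show ?thesis using w(2) by (metis converse_rtranclE)
qed

definition "nb v = (THE u. (v,u) \<in> E)"

lemma leaf_unique: assumes "v \<in> Lf" "(v,u) \<in> E" "(v,w) \<in> E" shows "u = w"
proof -
  have "u \<in> nbrs v" "w \<in> nbrs v" using assms unfolding nbrs_def by auto
  then show ?thesis using Lf_deg[OF assms(1)] card_le_Suc0_iff_eq[OF fin_nbrs] by auto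
qed

lemma nb: assumes "v \<in> Lf" shows "(v, nb v) \<in> E"
proof -
  obtain u where u: "(v,u) \<in> E" using has_nbr assms LfV by blast
  show ?thesis unfolding nb_def by (rule theI[of _ u]) (use u leaf_unique[OF assms] in auto)
qed

lemma nb_eq: "v \<in> Lf \<Longrightarrow> (v,u) \<in> E \<Longrightarrow> u = nb v"
  using nb leaf_unique by blast

lemma nb_I: assumes v: "v \<in> Lf" shows "nb v \<in> I"
proof (rule ccontr)
  assume "nb v \<notin> I"
  define w where "w = nb v"
  have vw: "(v,w) \<in> E" using nb[OF v] w_def by simp
  then have wV: "w \<in> V" using EV1 by auto
  then have wL: "w \<in> Lf" using \<open>nb v \<notin> I\<close> V_split w_def by auto
  have wv: "(w,v) \<in> E" using vw Esym by auto
  have cl: "y \<in> {v,w}" if "(v,y) \<in> E\<^sup>*" for y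
    using that
  proof (induction rule: rtrancl_induct)
    case base then show ?case by simp
  next
    case (step y z)
    then show ?case
    proof (cases "y = v")
      case True then show ?thesis using step leaf_unique[OF v vw] by auto
    next
      case False then have "y = w" using step by auto
      then show ?thesis using step leaf_unique[OF wL wv] by auto
    qed
  qed
  have "V \<subseteq> {v,w}" using cl connV v LfV by auto
  then have "card V \<le> card {v,w}" by (intro card_mono) auto
  moreover have "card {v,w} \<le> 2" by (cases "v = w") auto
  ultimately have "card V \<le> 2" by simp
  then show False using card_V_ge4 by simp
qed

lemma nbrs_leaf: "nbrs u \<inter> Lf = {v \<in> Lf. nb v = u}"
proof -
  have "v \<in> nbrs u \<longleftrightarrow> nb v = u" if vL: "v \<in> Lf" for v
  proof
    assume "v \<in> nbrs u" then show "nb v = u" using nb_eq[OF vL] Esym unfolding nbrs_def by auto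
  next
    assume "nb v = u" then show "v \<in> nbrs u" using nb[OF vL] Esym unfolding nbrs_def by auto
  qed
  then show ?thesis by auto
qed

lemma cardE: "card E = 2 * (card V - 1)"
proof -
  define h where "h p = {fst p, snd p}" for p :: "nat \<times> nat"
  have "{e. \<exists>x y. e = {x,y} \<and> (x,y) \<in> E} = h ` E"
  proof (intro set_eqI iffI)
    fix e assume "e \<in> {e. \<exists>x y. e = {x,y} \<and> (x,y) \<in> E}"
    then obtain x y where "e = {x,y}" "(x,y) \<in> E" by blast
    then show "e \<in> h ` E" unfolding h_def by (intro image_eqI[of _ _ "(x,y)"]) auto
  next
    fix e assume "e \<in> h ` E"
    then obtain p where "p \<in> E" "e = h p" by blast
    then show "e \<in> {e. \<exists>x y. e = {x,y} \<and> (x,y) \<in> E}" unfolding h_def by (cases p) auto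
  qed
  then have ne: "num_edges G = card (h ` E)" unfolding num_edges_def by simp
  have fib: "card {p \<in> E. h p = e} = 2" if e_in: "e \<in> h ` E" for e
  proof -
    obtain p where p: "p \<in> E" "e = h p" using e_in by auto
    obtain x y where "p = (x,y)" by (cases p)
    then have xy: "(x,y) \<in> E" "e = {x,y}" using p unfolding h_def by auto
    have "x \<noteq> y" using xy irr by auto
    have "{p \<in> E. h p = e} = {(x,y),(y,x)}"
    proof (intro set_eqI iffI)
      fix p assume "p \<in> {p \<in> E. h p = e}"
      moreover obtain a b where ab: "p = (a,b)" by (cases p)
      ultimately have "{a,b} = {x,y}" using xy unfolding h_def by auto
      then show "p \<in> {(x,y),(y,x)}" using ab by (auto simp: doubleton_eq_iff)
    next
      fix p assume "p \<in> {(x,y),(y,x)}"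
      then show "p \<in> {p \<in> E. h p = e}" using xy Esym unfolding h_def by auto
    qed
    then show ?thesis using \<open>x \<noteq> y\<close> by simp
  qed
  have "card E = (\<Sum>p\<in>E. (1::nat))" by simp
  also have "\<dots> = (\<Sum>e\<in>h ` E. \<Sum>p\<in>{p \<in> E. h p = e}. (1::nat))" by (rule sum.image_gen[OF finE])
  also have "\<dots> = (\<Sum>e\<in>h ` E. card {p \<in> E. h p = e})" by simp
  also have "\<dots> = (\<Sum>e\<in>h ` E. 2)" using fib by simp
  also have "\<dots> = 2 * num_edges G" using ne by simp
  finally show ?thesis using T3G unfolding T3_def is_tree_def by simp
qed

lemma card_E_prod: "finite A \<Longrightarrow> card (E \<inter> A \<times> B) = (\<Sum>u\<in>A. card (nbrs u \<inter> B))"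
proof -
  assume "finite A"
  have "E \<inter> A \<times> B = Sigma A (\<lambda>u. nbrs u \<inter> B)" unfolding nbrs_def by auto
  moreover have "\<forall>u\<in>A. finite (nbrs u \<inter> B)" using fin_nbrs by auto
  ultimately show ?thesis using card_SigmaI[OF \<open>finite A\<close>] by simp
qed

lemma conn_edges:
  assumes RV: "R \<subseteq> V" and Rne: "R \<noteq> {}" and Rc: "induces_connected G R"
  shows "card (E \<inter> R \<times> R) = 2 * (card R - 1)"
proof -
  have finR: "finite R" using RV finV by (rule finite_subset)
  obtain x where x: "x \<in> R" using Rne by auto
  have lo: "2 * card (R - {x}) \<le> card ((E \<inter> R \<times> R) - {x} \<times> {x})"
    by (rule dist_inj[OF finR]) (use irr x Rc symE in \<open>auto simp: induces_connected_def sym_def\<close>)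
  have "(E \<inter> R \<times> R) - {x} \<times> {x} = E \<inter> R \<times> R" using irr by auto
  then have "card ((E \<inter> R \<times> R) - {x} \<times> {x}) = card (E \<inter> R \<times> R)" by simp
  then have lo': "2 * (card R - 1) \<le> card (E \<inter> R \<times> R)" using lo x finR by simp
  have reach: "\<And>v. v \<in> V \<Longrightarrow> \<exists>r\<in>R. (r,v) \<in> E\<^sup>*" using x RV connV by blast
  have hi: "2 * card (V - R) \<le> card (E - R \<times> R)"
    by (rule dist_inj[OF finV EV symE]) (use irr RV reach in auto)
  have "card ((E \<inter> R \<times> R) \<union> (E - R \<times> R)) = card (E \<inter> R \<times> R) + card (E - R \<times> R)"
    by (rule card_Un_disjoint) (use finE in auto)
  moreover have "(E \<inter> R \<times> R) \<union> (E - R \<times> R) = E" by auto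
  ultimately have "card E = card (E \<inter> R \<times> R) + card (E - R \<times> R)" by simp
  moreover have "card (V - R) = card V - card R" using RV finR by (simp add: card_Diff_subset)
  moreover have "card R \<le> card V" using RV finV by (simp add: card_mono)
  moreover have "card R \<ge> 1" using finR Rne by (simp add: Suc_leI card_gt_0_iff)
  ultimately show ?thesis using hi lo' cardE
    by (simp add: algebra_simps diff_mult_distrib2)
qed

lemma I_conn: "induces_connected G I"
proof -
  have "induces_connected G (V - Lf)"
    by (rule remove_low_deg) (use fin_nbrs Lf_deg conn symE in \<open>auto simp: nbrs_def\<close>)
  moreover have "V - Lf = I" using V_split I_Lf by auto
  ultimately show ?thesis by simp
qed

definition "ell u = card {v \<in> Lf. nb v = u}"

lemma sum_ell_gen: "finite A \<Longrightarrow> (\<Sum>u\<in>A. ell u * c u) = (\<Sum>v\<in>{v\<in>Lf. nb v \<in> A}. c (nb v))"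
proof -
  assume A: "finite A"
  have "(\<Sum>v\<in>{v\<in>Lf. nb v \<in> A}. c (nb v)) = (\<Sum>u\<in>A. \<Sum>v\<in>{x \<in> {v\<in>Lf. nb v \<in> A}. nb x = u}. c (nb v))"
    by (rule sum.group[symmetric]) (use A finLf in auto)
  also have "\<dots> = (\<Sum>u\<in>A. ell u * c u)"
  proof (rule sum.cong[OF refl])
    fix u assume "u \<in> A"
    then have "{x \<in> {v\<in>Lf. nb v \<in> A}. nb x = u} = {v \<in> Lf. nb v = u}" by auto
    then show "(\<Sum>v\<in>{x \<in> {v\<in>Lf. nb v \<in> A}. nb x = u}. c (nb v)) = ell u * c u"
      unfolding ell_def by simp
  qed
  finally show ?thesis by simp
qed

lemma sum_ell: "(\<Sum>u\<in>I. ell u) = card Lf"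
proof -
  have "(\<Sum>u\<in>I. ell u * 1) = (\<Sum>v\<in>{v\<in>Lf. nb v \<in> I}. 1)" by (rule sum_ell_gen[OF finI])
  moreover have "{v\<in>Lf. nb v \<in> I} = Lf" using nb_I by auto
  ultimately show ?thesis by simp
qed

lemma card_nbrs_Lf: "card (nbrs u \<inter> Lf) = ell u" unfolding ell_def nbrs_leaf by simp

lemma L_ge: "card I + 2 \<le> card Lf"
proof -
  have "(\<Sum>u\<in>I. 3) \<le> (\<Sum>u\<in>I. card (nbrs u))" using I_deg3 by (intro sum_mono) auto
  also have "\<dots> \<le> (\<Sum>u\<in>I. card (nbrs u \<inter> I) + ell u)"
  proof (intro sum_mono)
    fix u assume "u \<in> I"
    have "nbrs u = (nbrs u \<inter> I) \<union> (nbrs u \<inter> Lf)" using nbrs_sub V_split by auto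
    then have "card (nbrs u) \<le> card (nbrs u \<inter> I) + card (nbrs u \<inter> Lf)" by (metis card_Un_le)
    then show "card (nbrs u) \<le> card (nbrs u \<inter> I) + ell u" using card_nbrs_Lf by simp
  qed
  also have "\<dots> = card (E \<inter> I \<times> I) + card Lf"
    using card_E_prod[OF finI] sum_ell by (simp add: sum.distrib)
  also have "\<dots> = 2 * (card I - 1) + card Lf" using conn_edges[OF IV I_ne I_conn] by simp
  finally have "3 * card I \<le> 2 * (card I - 1) + card Lf" by simp
  moreover have "card I \<ge> 1" using I_ne finI by (simp add: Suc_leI card_gt_0_iff)
  ultimately show ?thesis by linarith
qed

lemma card_V: "card V = card I + card Lf"
  using V_split I_Lf finI finLf by (simp add: card_Un_disjoint)

end



context sr
begin

definition "Subs = subtrees G"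
definition "N = card Subs"
definition "cnt v = card {S \<in> Subs. v \<in> S}"
definition "ncnt v = card {S \<in> Subs. v \<notin> S}"

lemma Subs_iff: "S \<in> Subs \<longleftrightarrow> S \<subseteq> V \<and> S \<noteq> {} \<and> induces_connected G S"
  unfolding Subs_def subtrees_def by simp

lemma finSubs: "finite Subs"
proof -
  have "Subs \<subseteq> Pow V" using Subs_iff by auto
  then show ?thesis using finV by (meson finite_Pow_iff finite_subset)
qed

lemma finS: "S \<in> Subs \<Longrightarrow> finite S" using Subs_iff finV finite_subset by blast

lemma cnt_ncnt: "cnt v + ncnt v = N"
proof -
  have "{S \<in> Subs. v \<in> S} \<union> {S \<in> Subs. v \<notin> S} = Subs" by auto
  moreover have "card ({S \<in> Subs. v \<in> S} \<union> {S \<in> Subs. v \<notin> S}) = cnt v + ncnt v"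
    unfolding cnt_def ncnt_def by (rule card_Un_disjoint) (use finSubs in auto)
  ultimately show ?thesis unfolding N_def by simp
qed

lemma Subs_I: assumes "S \<in> Subs" shows "induces_connected G (S \<inter> I)"
proof -
  have "induces_connected G (S - Lf)"
    by (rule remove_low_deg) (use fin_nbrs Lf_deg symE assms in \<open>auto simp: nbrs_def Subs_iff\<close>)
  moreover have "S - Lf = S \<inter> I" using assms V_split I_Lf unfolding Subs_iff by auto
  ultimately show ?thesis by simp
qed

lemma Subs_nbr: assumes "S \<in> Subs" "x \<in> S" "y \<in> S" "x \<noteq> y" shows "\<exists>z\<in>S. (x,z) \<in> E"
proof -
  have "(x,y) \<in> (E \<inter> S \<times> S)\<^sup>*" using assms unfolding Subs_iff induces_connected_def by auto
  then obtain z where "(x,z) \<in> E \<inter> S \<times> S" using assms(4) by (metis converse_rtranclE)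
  then show ?thesis by auto
qed

lemma leaf_in_S: assumes "S \<in> Subs" "v \<in> S" "v \<in> Lf" "w \<in> S" "w \<noteq> v" shows "nb v \<in> S"
  using Subs_nbr[OF assms(1,2,4) assms(5)[symmetric]] nb_eq[OF assms(3)] by auto

lemma Subs_noI: assumes "S \<in> Subs" "S \<inter> I = {}" shows "\<exists>v\<in>Lf. S = {v}"
proof -
  obtain x where x: "x \<in> S" using assms unfolding Subs_iff by auto
  have xL: "x \<in> Lf" using x assms V_split unfolding Subs_iff by auto
  have "S = {x}"
  proof (rule ccontr)
    assume "S \<noteq> {x}"
    then obtain y where "y \<in> S" "y \<noteq> x" using x by auto
    then have "nb x \<in> S" using leaf_in_S[OF assms(1) x xL] by auto
    then show False using nb_I[OF xL] assms(2) by auto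
  qed
  then show ?thesis using xL by auto
qed

lemma single_Subs: "v \<in> V \<Longrightarrow> {v} \<in> Subs"
  unfolding Subs_iff induces_connected_def by auto

lemma C1: assumes v: "v \<in> Lf" shows "cnt (nb v) \<le> 2 * cnt v"
proof -
  define u where "u = nb v"
  define A where "A = {S \<in> Subs. u \<in> S \<and> v \<notin> S}"
  define B where "B = {S \<in> Subs. u \<in> S \<and> v \<in> S}"
  have uv: "(u,v) \<in> E" using nb[OF v] Esym u_def by auto
  have "{S \<in> Subs. u \<in> S} = A \<union> B" unfolding A_def B_def by auto
  then have "cnt u = card A + card B"
    unfolding cnt_def by (simp, intro card_Un_disjoint) (use finSubs in \<open>auto simp: A_def B_def\<close>)
  moreover have "card A \<le> card B"
  proof (rule card_inj_on_le[of "insert v"])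
    show "inj_on (insert v) A" unfolding A_def inj_on_def by auto
    show "insert v ` A \<subseteq> B"
    proof
      fix T assume "T \<in> insert v ` A"
      then obtain S where S: "S \<in> A" "T = insert v S" by auto
      have "induces_connected G (S \<union> {v})"
        by (rule ic_add_pendants) (use S uv symE in \<open>auto simp: A_def Subs_iff\<close>)
      then show "T \<in> B" using S v LfV unfolding A_def B_def Subs_iff by auto
    qed
    show "finite B" using finSubs unfolding B_def by auto
  qed
  moreover have "card B \<le> cnt v" unfolding cnt_def B_def by (rule card_mono) (use finSubs in auto)
  ultimately show ?thesis using u_def by simp
qed

lemma C2: assumes v: "v \<in> Lf" shows "2 * cnt v \<le> N + 1"
proof -
  define C where "C = {S \<in> Subs. v \<in> S \<and> S \<noteq> {v}}"
  have "{S \<in> Subs. v \<in> S} \<subseteq> insert {v} C" unfolding C_def by auto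
  then have "cnt v \<le> card (insert {v} C)" unfolding cnt_def by (intro card_mono) (use finSubs in \<open>auto simp: C_def\<close>)
  also have "\<dots> \<le> Suc (card C)" by (rule card_insert_le_m1) (use finSubs in \<open>auto simp: C_def\<close>)
  finally have a: "cnt v \<le> Suc (card C)" .
  have "card C \<le> ncnt v" unfolding ncnt_def
  proof (rule card_inj_on_le[of "\<lambda>S. S - {v}"])
    show "inj_on (\<lambda>S. S - {v}) C" unfolding C_def inj_on_def by auto
    show "(\<lambda>S. S - {v}) ` C \<subseteq> {S \<in> Subs. v \<notin> S}"
    proof
      fix T assume "T \<in> (\<lambda>S. S - {v}) ` C"
      then obtain S where S: "S \<in> C" "T = S - {v}" by auto
      have "induces_connected G (S - {v})"
        by (rule remove_low_deg) (use fin_nbrs Lf_deg[OF v] symE S in \<open>auto simp: nbrs_def C_def Subs_iff\<close>)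
      moreover have "S - {v} \<noteq> {}" using S unfolding C_def by auto
      ultimately show "T \<in> {S \<in> Subs. v \<notin> S}" using S unfolding C_def Subs_iff by auto
    qed
    show "finite {S \<in> Subs. v \<notin> S}" using finSubs by auto
  qed
  then show ?thesis using a cnt_ncnt[of v] by simp
qed

lemma C3: "2 ^ card Lf \<le> N"
proof -
  have "card (Pow Lf) \<le> N" unfolding N_def
  proof (rule card_inj_on_le[of "\<lambda>A. I \<union> A"])
    show "inj_on (\<lambda>A. I \<union> A) (Pow Lf)"
    proof (rule inj_onI)
      fix A B assume "A \<in> Pow Lf" "B \<in> Pow Lf" "I \<union> A = I \<union> B"
      then show "A = B" using I_Lf by blast
    qed
    show "(\<lambda>A. I \<union> A) ` Pow Lf \<subseteq> Subs"
    proof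
      fix T assume "T \<in> (\<lambda>A. I \<union> A) ` Pow Lf"
      then obtain A where A: "A \<subseteq> Lf" "T = I \<union> A" by auto
      have "induces_connected G (I \<union> A)"
      proof (rule ic_add_pendants[OF I_conn _ symE])
        fix q assume "q \<in> A"
        then have "q \<in> Lf" using A by auto
        then show "\<exists>a\<in>I. (a,q) \<in> E" using nb[of q] nb_I[of q] Esym by blast
      qed
      then show "T \<in> Subs" using A I_ne IV LfV unfolding Subs_iff by auto
    qed
    show "finite Subs" by (rule finSubs)
  qed
  then show ?thesis using finLf by (simp add: card_Pow)
qed

lemma C4: "card {S \<in> Subs. S \<inter> I = {}} \<le> card Lf"
proof -
  have "{S \<in> Subs. S \<inter> I = {}} \<subseteq> (\<lambda>v. {v}) ` Lf" using Subs_noI by blast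
  then have "card {S \<in> Subs. S \<inter> I = {}} \<le> card ((\<lambda>v. {v}) ` Lf)"
    by (rule card_mono[rotated]) (use finLf in auto)
  also have "\<dots> \<le> card Lf" by (rule card_image_le[OF finLf])
  finally show ?thesis .
qed

lemma sum_card: "(\<Sum>S\<in>Subs. card S) = (\<Sum>v\<in>V. cnt v)"
proof -
  have "(\<Sum>S\<in>Subs. card S) = (\<Sum>S\<in>Subs. \<Sum>v\<in>V. if v \<in> S then 1 else 0)"
  proof (rule sum.cong[OF refl])
    fix S assume S: "S \<in> Subs"
    then have "S = V \<inter> S" unfolding Subs_iff by auto
    then have "card S = (\<Sum>v\<in>V \<inter> S. 1)" by simp
    also have "\<dots> = (\<Sum>v\<in>V. if v \<in> S then 1 else 0)" by (rule sum.inter_restrict[OF finV])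
    finally show "card S = (\<Sum>v\<in>V. if v \<in> S then 1 else 0)" .
  qed
  also have "\<dots> = (\<Sum>v\<in>V. \<Sum>S\<in>Subs. if v \<in> S then 1 else 0)" by (rule sum.swap)
  also have "\<dots> = (\<Sum>v\<in>V. cnt v)"
  proof (rule sum.cong[OF refl])
    fix v
    have "{S \<in> Subs. v \<in> S} = Subs \<inter> {S. v \<in> S}" by auto
    then have "cnt v = (\<Sum>S\<in>Subs \<inter> {S. v \<in> S}. 1)" unfolding cnt_def by simp
    also have "\<dots> = (\<Sum>S\<in>Subs. if S \<in> {S. v \<in> S} then 1 else 0)" by (rule sum.inter_restrict[OF finSubs])
    finally show "(\<Sum>S\<in>Subs. if v \<in> S then 1 else 0) = cnt v" by simp
  qed
  finally show ?thesis .
qed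

end



context sr
begin

definition "Rb a b = {u \<in> I - {a}. (b,u) \<in> (E \<inter> (I - {a}) \<times> (I - {a}))\<^sup>*}"
definition "Lr a b = (\<Sum>u\<in>Rb a b. ell u)"

lemma Rb_sub: "Rb a b \<subseteq> I - {a}" unfolding Rb_def by auto
lemma finRb: "finite (Rb a b)" using Rb_sub finI by (meson finite_Diff finite_subset)

lemma b_Rb: assumes "b \<in> I" "(a,b) \<in> E" shows "b \<in> Rb a b"
  using assms irr unfolding Rb_def by auto

lemma Rb_ext: assumes "y \<in> Rb a b" "(y,z) \<in> E" "z \<in> I" "z \<noteq> a" shows "z \<in> Rb a b"
proof -
  have "(b,y) \<in> (E \<inter> (I - {a}) \<times> (I - {a}))\<^sup>*" "y \<in> I - {a}" using assms(1) unfolding Rb_def by auto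
  moreover have "(y,z) \<in> E \<inter> (I - {a}) \<times> (I - {a})" using assms calculation(2) by auto
  ultimately show ?thesis using assms(3,4) unfolding Rb_def by (auto intro: rtrancl_into_rtrancl)
qed

lemma Rb_conn: assumes "b \<in> I" "(a,b) \<in> E" shows "induces_connected G (Rb a b)"
proof -
  let ?F = "E \<inter> (I - {a}) \<times> (I - {a})" and ?R = "Rb a b"
  have path: "(b,u) \<in> (E \<inter> ?R \<times> ?R)\<^sup>*" if "(b,u) \<in> ?F\<^sup>*" for u
    using that
  proof (induction rule: rtrancl_induct)
    case base then show ?case by simp
  next
    case (step y z)
    then have "y \<in> ?R" "z \<in> ?R" using b_Rb[OF assms] unfolding Rb_def
      by (auto intro: rtrancl_into_rtrancl)
    then show ?case using step by (auto intro: rtrancl_into_rtrancl)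
  qed
  show ?thesis unfolding induces_connected_def
  proof (intro ballI)
    fix x y assume "x \<in> ?R" "y \<in> ?R"
    then have "(b,x) \<in> (E \<inter> ?R \<times> ?R)\<^sup>*" "(b,y) \<in> (E \<inter> ?R \<times> ?R)\<^sup>*" using path unfolding Rb_def by auto
    then show "(x,y) \<in> (E \<inter> ?R \<times> ?R)\<^sup>*" using rtrancl_sym_rev[OF symE] by (meson rtrancl_trans)
  qed
qed

lemma Rb_a_conn: assumes "b \<in> I" "(a,b) \<in> E" shows "induces_connected G (Rb a b \<union> {a})"
  by (rule ic_union_edge[OF Rb_conn[OF assms] _ b_Rb[OF assms]])
     (use assms Esym symE in \<open>auto simp: induces_connected_def\<close>)

lemma Rb_a_edges: assumes a: "a \<in> I" and b: "b \<in> I" and ab: "(a,b) \<in> E"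
  shows "card (E \<inter> Rb a b \<times> {a}) \<le> 1"
proof -
  let ?R = "Rb a b"
  have aR: "a \<notin> ?R" using Rb_sub by auto
  have RV: "?R \<subseteq> V" using Rb_sub IV by auto
  have c1: "card (E \<inter> (?R \<union> {a}) \<times> (?R \<union> {a})) = 2 * (card (?R \<union> {a}) - 1)"
    by (rule conn_edges) (use RV a IV Rb_a_conn[OF b ab] in auto)
  have c2: "card (E \<inter> ?R \<times> ?R) = 2 * (card ?R - 1)"
    by (rule conn_edges) (use RV b_Rb[OF b ab] Rb_conn[OF b ab] in auto)
  have cR: "card (?R \<union> {a}) = Suc (card ?R)" using aR finRb by simp
  have Rne: "card ?R \<ge> 1" using b_Rb[OF b ab] finRb by (metis One_nat_def Suc_leI card_gt_0_iff empty_iff)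
  have sw: "card (E \<inter> {a} \<times> ?R) = card (E \<inter> ?R \<times> {a})"
  proof -
    have "E \<inter> {a} \<times> ?R = (\<lambda>(x,y). (y,x)) ` (E \<inter> ?R \<times> {a})" using Esym by auto
    moreover have "inj_on (\<lambda>(x,y). (y,x)) (E \<inter> ?R \<times> {a})" by (auto simp: inj_on_def)
    ultimately show ?thesis by (simp add: card_image)
  qed
  have dec: "E \<inter> (?R \<union> {a}) \<times> (?R \<union> {a}) = (E \<inter> ?R \<times> ?R) \<union> (E \<inter> ?R \<times> {a}) \<union> (E \<inter> {a} \<times> ?R)"
    using irr by auto
  have fin: "finite (E \<inter> X)" for X using finE by auto
  have "card (E \<inter> (?R \<union> {a}) \<times> (?R \<union> {a})) = card (E \<inter> ?R \<times> ?R) + card (E \<inter> ?R \<times> {a}) + card (E \<inter> {a} \<times> ?R)"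
  proof -
    have "card ((E \<inter> ?R \<times> ?R) \<union> (E \<inter> ?R \<times> {a}) \<union> (E \<inter> {a} \<times> ?R))
        = card ((E \<inter> ?R \<times> ?R) \<union> (E \<inter> ?R \<times> {a})) + card (E \<inter> {a} \<times> ?R)"
      by (rule card_Un_disjoint) (use fin aR in auto)
    moreover have "card ((E \<inter> ?R \<times> ?R) \<union> (E \<inter> ?R \<times> {a})) = card (E \<inter> ?R \<times> ?R) + card (E \<inter> ?R \<times> {a})"
      by (rule card_Un_disjoint) (use fin aR in auto)
    ultimately show ?thesis unfolding dec by simp
  qed
  then show ?thesis using c1 c2 cR Rne sw by simp
qed

lemma Rb_a_nbr: assumes a: "a \<in> I" and b: "b \<in> I" and ab: "(a,b) \<in> E"
    and u: "u \<in> Rb a b" and ua: "(u,a) \<in> E" shows "u = b"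
proof -
  have "(u,a) \<in> E \<inter> Rb a b \<times> {a}" "(b,a) \<in> E \<inter> Rb a b \<times> {a}" using u ua b_Rb[OF b ab] ab Esym by auto
  moreover have "\<forall>p\<in>E \<inter> Rb a b \<times> {a}. \<forall>q\<in>E \<inter> Rb a b \<times> {a}. p = q"
    using Rb_a_edges[OF a b ab] card_le_Suc0_iff_eq[of "E \<inter> Rb a b \<times> {a}"] finE by auto
  ultimately have "(u,a) = (b,a)" by blast
  then show ?thesis by simp
qed

lemma Lr_ge: assumes a: "a \<in> I" and b: "b \<in> I" and ab: "(a,b) \<in> E"
  shows "card (Rb a b) + 1 \<le> Lr a b"
proof -
  let ?R = "Rb a b"
  have RV: "?R \<subseteq> V" using Rb_sub IV by auto
  have c2: "card (E \<inter> ?R \<times> ?R) = 2 * (card ?R - 1)"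
    by (rule conn_edges) (use RV b_Rb[OF b ab] Rb_conn[OF b ab] in auto)
  have Rne: "card ?R \<ge> 1" using b_Rb[OF b ab] finRb by (metis One_nat_def Suc_leI card_gt_0_iff empty_iff)
  have "(\<Sum>u\<in>?R. 3) \<le> (\<Sum>u\<in>?R. card (nbrs u))" using I_deg3 Rb_sub by (intro sum_mono) auto
  also have "\<dots> \<le> (\<Sum>u\<in>?R. card (nbrs u \<inter> ?R) + ell u + card (nbrs u \<inter> {a}))"
  proof (intro sum_mono)
    fix u assume u: "u \<in> ?R"
    have "nbrs u \<subseteq> (nbrs u \<inter> ?R) \<union> (nbrs u \<inter> Lf) \<union> (nbrs u \<inter> {a})"
    proof
      fix w assume w: "w \<in> nbrs u"
      then have "w \<in> V" using nbrs_sub by auto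
      moreover have "w \<in> I \<Longrightarrow> w \<noteq> a \<Longrightarrow> w \<in> ?R" using Rb_ext[OF u] w unfolding nbrs_def by auto
      ultimately show "w \<in> (nbrs u \<inter> ?R) \<union> (nbrs u \<inter> Lf) \<union> (nbrs u \<inter> {a})" using V_split w by auto
    qed
    then have "card (nbrs u) \<le> card ((nbrs u \<inter> ?R) \<union> (nbrs u \<inter> Lf) \<union> (nbrs u \<inter> {a}))"
      by (intro card_mono) (use fin_nbrs in auto)
    also have "\<dots> \<le> card (nbrs u \<inter> ?R) + card (nbrs u \<inter> Lf) + card (nbrs u \<inter> {a})"
      by (meson card_Un_le add_le_mono order_trans le_refl)
    finally show "card (nbrs u) \<le> card (nbrs u \<inter> ?R) + ell u + card (nbrs u \<inter> {a})"
      using card_nbrs_Lf by simp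
  qed
  also have "\<dots> = card (E \<inter> ?R \<times> ?R) + Lr a b + card (E \<inter> ?R \<times> {a})"
    using card_E_prod[OF finRb] unfolding Lr_def by (simp add: sum.distrib)
  finally have "3 * card ?R \<le> 2 * (card ?R - 1) + Lr a b + 1"
    using c2 Rb_a_edges[OF a b ab] by simp
  then show ?thesis using Rne by linarith
qed

lemma Rb_cover: assumes a: "a \<in> I" and b: "b \<in> I" and ab: "(a,b) \<in> E" and u: "u \<in> I"
  shows "u \<in> Rb a b \<union> Rb b a"
proof -
  have "(b,u) \<in> (E \<inter> I \<times> I)\<^sup>*" using I_conn b u unfolding induces_connected_def by auto
  then show ?thesis
  proof (induction rule: rtrancl_induct)
    case base then show ?case using b_Rb[OF b ab] by auto
  next
    case (step y z)
    show ?case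
    proof (cases "y \<in> Rb a b")
      case True
      then show ?thesis using Rb_ext[OF True] step b_Rb[OF a Esym[OF ab]] by (cases "z = a") auto
    next
      case False
      then have "y \<in> Rb b a" using step by auto
      then show ?thesis using Rb_ext[OF \<open>y \<in> Rb b a\<close>] step b_Rb[OF b ab] by (cases "z = b") auto
    qed
  qed
qed

lemma Lr_sum: assumes a: "a \<in> I" and b: "b \<in> I" and ab: "(a,b) \<in> E"
  shows "card Lf \<le> Lr a b + Lr b a"
proof -
  have "card Lf = (\<Sum>u\<in>I. ell u)" using sum_ell by simp
  also have "\<dots> \<le> (\<Sum>u\<in>Rb a b \<union> Rb b a. ell u)"
    by (rule sum_mono2) (use Rb_cover[OF a b ab] finRb in auto)
  also have "\<dots> \<le> Lr a b + Lr b a" unfolding Lr_def using sum_Un_nat[OF finRb finRb, of ell a b b a] by linarith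
  finally show ?thesis .
qed

end



context sr
begin

lemma S_disj_Rb: assumes a: "a \<in> I" and b: "b \<in> I" and ab: "(a,b) \<in> E"
  and S: "S \<in> Subs" and aS: "a \<in> S" and bS: "b \<notin> S"
  shows "S \<inter> Rb a b = {}"
proof -
  have "z \<notin> Rb a b" if "(a,z) \<in> (E \<inter> (S \<inter> I) \<times> (S \<inter> I))\<^sup>*" for z
    using that
  proof (induction rule: rtrancl_induct)
    case base then show ?case using Rb_sub by auto
  next
    case (step y z)
    show ?case
    proof
      assume zR: "z \<in> Rb a b"
      show False
      proof (cases "y = a")
        case True
        then have "z = b" using Rb_a_nbr[OF a b ab zR] step Esym by auto
        then show False using step bS by auto
      next
        case False
        have "y \<in> Rb a b" using Rb_ext[OF zR _ _ False] step Esym by auto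
        then show False using step by auto
      qed
    qed
  qed
  moreover have "(a,z) \<in> (E \<inter> (S \<inter> I) \<times> (S \<inter> I))\<^sup>*" if "z \<in> S \<inter> I" for z
    using Subs_I[OF S] that aS a unfolding induces_connected_def by auto
  ultimately show ?thesis using Rb_sub[of a b] by blast
qed

definition "LvR a b = {v \<in> Lf. nb v \<in> Rb a b}"

lemma card_LvR: "card (LvR a b) = Lr a b"
  using sum_ell_gen[OF finRb, of "\<lambda>_. 1" a b] unfolding Lr_def LvR_def by simp

lemma C5: assumes a: "a \<in> I" and b: "b \<in> I" and ab: "(a,b) \<in> E"
  shows "card {S \<in> Subs. a \<in> S \<and> b \<notin> S} * (1 + 2 ^ Lr a b) \<le> N"
proof -
  define X where "X = {S \<in> Subs. a \<in> S \<and> b \<notin> S}"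
  define Y where "Y = {S \<in> Subs. a \<in> S \<and> b \<in> S}"
  define F where "F p = fst p \<union> Rb a b \<union> snd p" for p :: "nat set \<times> nat set"
  have finLv: "finite (LvR a b)" using finLf unfolding LvR_def by auto
  have dS: "S \<inter> Rb a b = {}" "S \<inter> LvR a b = {}" if "S \<in> X" for S
  proof -
    show d1: "S \<inter> Rb a b = {}" using S_disj_Rb[OF a b ab] that unfolding X_def by auto
    show "S \<inter> LvR a b = {}"
    proof (rule ccontr)
      assume "S \<inter> LvR a b \<noteq> {}"
      then obtain v where v: "v \<in> S" "v \<in> Lf" "nb v \<in> Rb a b" unfolding LvR_def by auto
      have "a \<noteq> v" using a v(2) I_Lf by auto
      then have "nb v \<in> S" using leaf_in_S[OF _ v(1,2)] that unfolding X_def by auto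
      then show False using d1 v(3) by auto
    qed
  qed
  have RL: "Rb a b \<inter> LvR a b = {}" using Rb_sub I_Lf unfolding LvR_def by auto
  have inj: "inj_on F (X \<times> Pow (LvR a b))"
  proof (rule inj_onI)
    fix p q assume p: "p \<in> X \<times> Pow (LvR a b)" and q: "q \<in> X \<times> Pow (LvR a b)" and eq: "F p = F q"
    have "fst p = F p - (Rb a b \<union> LvR a b)" "snd p = F p \<inter> LvR a b"
      using p dS[of "fst p"] RL unfolding F_def by auto
    moreover have "fst q = F q - (Rb a b \<union> LvR a b)" "snd q = F q \<inter> LvR a b"
      using q dS[of "fst q"] RL unfolding F_def by auto
    ultimately show "p = q" using eq by (simp add: prod_eq_iff)
  qed
  have img: "F ` (X \<times> Pow (LvR a b)) \<subseteq> Y"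
  proof
    fix T assume "T \<in> F ` (X \<times> Pow (LvR a b))"
    then obtain S A where SA: "S \<in> X" "A \<subseteq> LvR a b" "T = S \<union> Rb a b \<union> A" unfolding F_def by auto
    have c1: "induces_connected G (S \<union> Rb a b)"
      by (rule ic_union_edge[OF _ Rb_conn[OF b ab] _ b_Rb[OF b ab] ab symE])
         (use SA(1) in \<open>auto simp: X_def Subs_iff\<close>)
    have "induces_connected G ((S \<union> Rb a b) \<union> A)"
    proof (rule ic_add_pendants[OF c1 _ symE])
      fix q assume "q \<in> A"
      then have "q \<in> Lf" "nb q \<in> Rb a b" using SA(2) unfolding LvR_def by auto
      then show "\<exists>x\<in>S \<union> Rb a b. (x,q) \<in> E" using nb Esym by blast
    qed
    moreover have "T \<subseteq> V" using SA Rb_sub[of a b] IV LfV unfolding X_def LvR_def Subs_iff by blast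
    ultimately show "T \<in> Y" using SA b_Rb[OF b ab] unfolding X_def Y_def Subs_iff by auto
  qed
  have finY: "finite Y" using finSubs unfolding Y_def by auto
  have "card (X \<times> Pow (LvR a b)) \<le> card Y" using card_inj_on_le[OF inj img finY] .
  then have "card X * 2 ^ Lr a b \<le> card Y"
    using finLv by (simp add: card_cartesian_product card_Pow card_LvR)
  moreover have "card X + card Y \<le> N"
  proof -
    have "card (X \<union> Y) = card X + card Y"
      by (rule card_Un_disjoint) (use finSubs in \<open>auto simp: X_def Y_def\<close>)
    moreover have "card (X \<union> Y) \<le> N" unfolding N_def by (rule card_mono[OF finSubs]) (auto simp: X_def Y_def)
    ultimately show ?thesis by simp
  qed
  ultimately show ?thesis unfolding X_def[symmetric] by (simp add: algebra_simps)
qed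

lemma C6: assumes S: "S \<in> Subs" and s: "s \<in> S \<inter> I" and u: "u \<in> I" and uS: "u \<notin> S"
  shows "\<exists>a b. (a,b) \<in> E \<and> a \<in> S \<inter> I \<and> b \<in> I \<and> b \<notin> S \<and> u \<in> Rb a b"
proof -
  have "(s,u) \<in> (E \<inter> I \<times> I)\<^sup>*" using I_conn s u unfolding induces_connected_def by auto
  then have "u \<in> S \<or> (\<exists>a b. (a,b) \<in> E \<and> a \<in> S \<inter> I \<and> b \<in> I \<and> b \<notin> S \<and> u \<in> Rb a b)"
  proof (induction rule: rtrancl_induct)
    case base then show ?case using s by auto
  next
    case (step y z)
    show ?case
    proof (cases "y \<in> S")
      case True
      show ?thesis
      proof (cases "z \<in> S")
        case False
        then have "(y,z) \<in> E \<and> y \<in> S \<inter> I \<and> z \<in> I \<and> z \<notin> S \<and> z \<in> Rb y z"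
          using True step b_Rb by auto
        then show ?thesis by blast
      qed simp
    next
      case False
      then obtain a b where ab: "(a,b) \<in> E" "a \<in> S \<inter> I" "b \<in> I" "b \<notin> S" "y \<in> Rb a b" using step by auto
      show ?thesis
      proof (cases "z = a")
        case True then show ?thesis using ab by auto
      next
        case False
        then have "z \<in> Rb a b" using Rb_ext[OF ab(5)] step by auto
        then show ?thesis using ab by blast
      qed
    qed
  qed
  then show ?thesis using uS by auto
qed

end



context sr
begin

definition "g u = 2 + ell u"
definition "mv S = (\<Sum>u\<in>I - S. g u)"
definition "W a b = (\<Sum>u\<in>Rb a b. g u)"
definition "EI = E \<inter> I \<times> I"
definition "Bd S = {p \<in> EI. fst p \<in> S \<and> snd p \<notin> S}"

lemma finEI: "finite EI" using finE unfolding EI_def by auto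

lemma sumg_I: "(\<Sum>u\<in>I. g u) = 2 * card I + card Lf"
proof -
  have "(\<Sum>u\<in>I. g u) = (\<Sum>u\<in>I. 2) + (\<Sum>u\<in>I. ell u)" unfolding g_def by (rule sum.distrib)
  then show ?thesis using sum_ell by simp
qed

lemma step2: "(\<Sum>u\<in>I. g u * cnt u) \<le> 2 * (\<Sum>S\<in>Subs. card S)"
proof -
  have "(\<Sum>u\<in>I. ell u * cnt u) = (\<Sum>v\<in>{v\<in>Lf. nb v \<in> I}. cnt (nb v))" by (rule sum_ell_gen[OF finI])
  also have "{v\<in>Lf. nb v \<in> I} = Lf" using nb_I by auto
  also have "(\<Sum>v\<in>Lf. cnt (nb v)) \<le> (\<Sum>v\<in>Lf. 2 * cnt v)" using C1 by (intro sum_mono) auto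
  finally have a: "(\<Sum>u\<in>I. ell u * cnt u) \<le> 2 * (\<Sum>v\<in>Lf. cnt v)" by (simp add: sum_distrib_left)
  have "(\<Sum>S\<in>Subs. card S) = (\<Sum>v\<in>I. cnt v) + (\<Sum>v\<in>Lf. cnt v)"
    using sum_card V_split I_Lf finI finLf by (simp add: sum.union_disjoint)
  moreover have "(\<Sum>u\<in>I. g u * cnt u) = 2 * (\<Sum>u\<in>I. cnt u) + (\<Sum>u\<in>I. ell u * cnt u)"
  proof -
    have "(\<Sum>u\<in>I. g u * cnt u) = (\<Sum>u\<in>I. 2 * cnt u + ell u * cnt u)" unfolding g_def by (rule sum.cong[OF refl]) (simp add: add_mult_distrib)
    also have "\<dots> = (\<Sum>u\<in>I. 2 * cnt u) + (\<Sum>u\<in>I. ell u * cnt u)" by (rule sum.distrib)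
    finally show ?thesis by (simp add: sum_distrib_left)
  qed
  ultimately show ?thesis using a by linarith
qed

lemma upper_sum: "2 * (\<Sum>S\<in>Subs. card S) \<le> 2 * card I * N + card Lf * (N + 1)"
proof -
  have "(\<Sum>S\<in>Subs. card S) = (\<Sum>v\<in>I. cnt v) + (\<Sum>v\<in>Lf. cnt v)"
    using sum_card V_split I_Lf finI finLf by (simp add: sum.union_disjoint)
  moreover have "(\<Sum>v\<in>I. cnt v) \<le> (\<Sum>v\<in>I. N)" using cnt_ncnt by (intro sum_mono) (metis le_add1)
  moreover have "(\<Sum>v\<in>Lf. 2 * cnt v) \<le> (\<Sum>v\<in>Lf. N + 1)" using C2 by (intro sum_mono) auto
  ultimately show ?thesis by (simp add: sum_distrib_left[symmetric] algebra_simps)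
qed

lemma M_eq: "(\<Sum>u\<in>I. g u * ncnt u) = (\<Sum>S\<in>Subs. mv S)"
proof -
  have "(\<Sum>u\<in>I. g u * ncnt u) = (\<Sum>u\<in>I. \<Sum>S\<in>Subs. if u \<notin> S then g u else 0)"
  proof (rule sum.cong[OF refl])
    fix u
    have "{S \<in> Subs. u \<notin> S} = Subs \<inter> {S. u \<notin> S}" by auto
    then have "ncnt u = (\<Sum>S\<in>Subs \<inter> {S. u \<notin> S}. 1)" unfolding ncnt_def by simp
    also have "\<dots> = (\<Sum>S\<in>Subs. if S \<in> {S. u \<notin> S} then 1 else 0)" by (rule sum.inter_restrict[OF finSubs])
    finally have "g u * ncnt u = (\<Sum>S\<in>Subs. g u * (if u \<notin> S then 1 else 0))"
      by (simp add: sum_distrib_left)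
    also have "\<dots> = (\<Sum>S\<in>Subs. if u \<notin> S then g u else 0)" by (rule sum.cong) auto
    finally show "g u * ncnt u = (\<Sum>S\<in>Subs. if u \<notin> S then g u else 0)" .
  qed
  also have "\<dots> = (\<Sum>S\<in>Subs. \<Sum>u\<in>I. if u \<notin> S then g u else 0)" by (rule sum.swap)
  also have "\<dots> = (\<Sum>S\<in>Subs. mv S)"
  proof (rule sum.cong[OF refl])
    fix S
    have "mv S = (\<Sum>u\<in>I \<inter> {u. u \<notin> S}. g u)" unfolding mv_def by (rule sum.cong) auto
    also have "\<dots> = (\<Sum>u\<in>I. if u \<in> {u. u \<notin> S} then g u else 0)" by (rule sum.inter_restrict[OF finI])
    finally show "(\<Sum>u\<in>I. if u \<notin> S then g u else 0) = mv S" by simp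
  qed
  finally show ?thesis .
qed

lemma mv_bound: assumes S: "S \<in> Subs" and SI: "S \<inter> I \<noteq> {}"
  shows "mv S \<le> (\<Sum>p\<in>Bd S. W (fst p) (snd p))"
proof -
  have finBd: "finite (Bd S)" using finEI unfolding Bd_def by auto
  obtain s where s: "s \<in> S \<inter> I" using SI by auto
  have "mv S \<le> (\<Sum>u\<in>I - S. \<Sum>p\<in>Bd S. if u \<in> Rb (fst p) (snd p) then g u else 0)"
    unfolding mv_def
  proof (rule sum_mono)
    fix u assume u: "u \<in> I - S"
    obtain a b where ab: "(a,b) \<in> E" "a \<in> S \<inter> I" "b \<in> I" "b \<notin> S" "u \<in> Rb a b"
      using C6[OF S s] u by blast
    have "(a,b) \<in> Bd S" using ab unfolding Bd_def EI_def by auto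
    then have "(if u \<in> Rb (fst (a,b)) (snd (a,b)) then g u else 0) \<le> (\<Sum>p\<in>Bd S. if u \<in> Rb (fst p) (snd p) then g u else 0)"
      by (rule member_le_sum) (use finBd in auto)
    then show "g u \<le> (\<Sum>p\<in>Bd S. if u \<in> Rb (fst p) (snd p) then g u else 0)" using ab by simp
  qed
  also have "\<dots> = (\<Sum>p\<in>Bd S. \<Sum>u\<in>I - S. if u \<in> Rb (fst p) (snd p) then g u else 0)" by (rule sum.swap)
  also have "\<dots> \<le> (\<Sum>p\<in>Bd S. W (fst p) (snd p))"
  proof (rule sum_mono)
    fix p
    have "(\<Sum>u\<in>I - S. if u \<in> Rb (fst p) (snd p) then g u else 0) = (\<Sum>u\<in>(I - S) \<inter> Rb (fst p) (snd p). g u)"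
      by (rule sum.inter_restrict[symmetric]) (use finI in auto)
    also have "\<dots> \<le> W (fst p) (snd p)" unfolding W_def by (rule sum_mono2) (use finRb in auto)
    finally show "(\<Sum>u\<in>I - S. if u \<in> Rb (fst p) (snd p) then g u else 0) \<le> W (fst p) (snd p)" .
  qed
  finally show ?thesis .
qed

lemma mv_le: "mv S \<le> 2 * card I + card Lf"
  unfolding mv_def sumg_I[symmetric] by (rule sum_mono2) (use finI in auto)

lemma M_bound: "(\<Sum>S\<in>Subs. mv S) \<le> card Lf * (2 * card I + card Lf)
   + (\<Sum>p\<in>EI. W (fst p) (snd p) * card {S \<in> Subs. fst p \<in> S \<and> snd p \<notin> S})"
proof -
  let ?K = "2 * card I + card Lf"
  let ?h = "\<lambda>S. \<Sum>p\<in>Bd S. W (fst p) (snd p)"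
  have "(\<Sum>S\<in>Subs. mv S) \<le> (\<Sum>S\<in>Subs. if S \<inter> I = {} then ?K else ?h S)"
  proof (rule sum_mono)
    fix S assume S: "S \<in> Subs"
    show "mv S \<le> (if S \<inter> I = {} then ?K else ?h S)"
    proof (cases "S \<inter> I = {}")
      case True then show ?thesis using mv_le by simp
    next
      case False then show ?thesis using mv_bound[OF S False] by simp
    qed
  qed
  also have "\<dots> = (\<Sum>S\<in>Subs \<inter> {S. S \<inter> I = {}}. ?K) + (\<Sum>S\<in>Subs \<inter> - {S. S \<inter> I = {}}. ?h S)"
    by (rule sum.If_cases[OF finSubs])
  also have "\<dots> \<le> card Lf * ?K + (\<Sum>S\<in>Subs. ?h S)"
  proof (rule add_mono)
    have "Subs \<inter> {S. S \<inter> I = {}} = {S \<in> Subs. S \<inter> I = {}}" by blast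
    then have "card (Subs \<inter> {S. S \<inter> I = {}}) \<le> card Lf" using C4 by simp
    then show "(\<Sum>S\<in>Subs \<inter> {S. S \<inter> I = {}}. ?K) \<le> card Lf * ?K" by simp
    show "(\<Sum>S\<in>Subs \<inter> - {S. S \<inter> I = {}}. ?h S) \<le> (\<Sum>S\<in>Subs. ?h S)"
      by (rule sum_mono2[OF finSubs]) auto
  qed
  also have "(\<Sum>S\<in>Subs. ?h S) = (\<Sum>p\<in>EI. W (fst p) (snd p) * card {S \<in> Subs. fst p \<in> S \<and> snd p \<notin> S})"
  proof -
    have "(\<Sum>S\<in>Subs. ?h S) = (\<Sum>S\<in>Subs. \<Sum>p\<in>EI. if fst p \<in> S \<and> snd p \<notin> S then W (fst p) (snd p) else 0)"
    proof (rule sum.cong[OF refl])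
      fix S
      have "Bd S = EI \<inter> {p. fst p \<in> S \<and> snd p \<notin> S}" unfolding Bd_def by auto
      then show "?h S = (\<Sum>p\<in>EI. if fst p \<in> S \<and> snd p \<notin> S then W (fst p) (snd p) else 0)"
        using sum.inter_restrict[OF finEI, of "\<lambda>p. W (fst p) (snd p)" "{p. fst p \<in> S \<and> snd p \<notin> S}"] by simp
    qed
    also have "\<dots> = (\<Sum>p\<in>EI. \<Sum>S\<in>Subs. if fst p \<in> S \<and> snd p \<notin> S then W (fst p) (snd p) else 0)" by (rule sum.swap)
    also have "\<dots> = (\<Sum>p\<in>EI. W (fst p) (snd p) * card {S \<in> Subs. fst p \<in> S \<and> snd p \<notin> S})"
    proof (rule sum.cong[OF refl])
      fix p
      have "{S \<in> Subs. fst p \<in> S \<and> snd p \<notin> S} = Subs \<inter> {S. fst p \<in> S \<and> snd p \<notin> S}" by auto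
      then have "card {S \<in> Subs. fst p \<in> S \<and> snd p \<notin> S} = (\<Sum>S\<in>Subs \<inter> {S. fst p \<in> S \<and> snd p \<notin> S}. 1)" by simp
      also have "\<dots> = (\<Sum>S\<in>Subs. if S \<in> {S. fst p \<in> S \<and> snd p \<notin> S} then 1 else 0)" by (rule sum.inter_restrict[OF finSubs])
      finally have "W (fst p) (snd p) * card {S \<in> Subs. fst p \<in> S \<and> snd p \<notin> S} = (\<Sum>S\<in>Subs. W (fst p) (snd p) * (if S \<in> {S. fst p \<in> S \<and> snd p \<notin> S} then 1 else 0))"
        by (simp add: sum_distrib_left)
      also have "\<dots> = (\<Sum>S\<in>Subs. if fst p \<in> S \<and> snd p \<notin> S then W (fst p) (snd p) else 0)" by (rule sum.cong) auto
      finally show "(\<Sum>S\<in>Subs. if fst p \<in> S \<and> snd p \<notin> S then W (fst p) (snd p) else 0) = W (fst p) (snd p) * card {S \<in> Subs. fst p \<in> S \<and> snd p \<notin> S}" by simp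
    qed
    finally show ?thesis .
  qed
  finally show ?thesis by simp
qed

end



lemma nat_ineq: "2 \<le> x \<Longrightarrow> 15 * x \<le> 14 + 4 * (2::nat) ^ x"
proof (induction x rule: nat_induct_at_least)
  case base then show ?case by simp
next
  case (Suc m)
  have "(2::nat) ^ 2 \<le> 2 ^ m" by (rule power_increasing) (use Suc(1) in auto)
  then have "(4::nat) \<le> 2 ^ m" by simp
  then show ?case using Suc by simp
qed

context sr
begin

abbreviation "nn \<equiv> real (card V)"
abbreviation "kk \<equiv> real (card I)"
abbreviation "LL \<equiv> real (card Lf)"
definition "eps = 2 * nn / 2 powr (nn / 4)"
definition "f a b = real (W a b) / (1 + 2 ^ Lr a b)"

lemma W_eq: "W a b = 2 * card (Rb a b) + Lr a b"
proof -
  have "W a b = (\<Sum>u\<in>Rb a b. 2) + (\<Sum>u\<in>Rb a b. ell u)" unfolding W_def g_def by (rule sum.distrib)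
  then show ?thesis unfolding Lr_def by simp
qed

lemma W_le: "W a b \<le> 2 * card I + card Lf"
  unfolding W_def sumg_I[symmetric] by (rule sum_mono2) (use finI Rb_sub in auto)

lemma nL: "nn \<le> 2 * LL" using L_ge card_V by simp
lemma LN: "2 powr (nn / 4) \<le> real N"
proof -
  have "2 powr (nn / 4) \<le> 2 powr LL" using nL by (intro powr_mono) (auto simp: card_V)
  also have "\<dots> = real (2 ^ card Lf)" by (simp add: powr_realpow)
  also have "\<dots> \<le> real N" using C3 by (metis of_nat_le_iff)
  finally show ?thesis .
qed

lemma f_small: assumes a: "a \<in> I" and b: "b \<in> I" and ab: "(a,b) \<in> E" shows "f a b \<le> 4/5"
proof -
  have L: "card (Rb a b) + 1 \<le> Lr a b" by (rule Lr_ge[OF a b ab])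
  have "card (Rb a b) \<ge> 1" using b_Rb[OF b ab] finRb by (metis One_nat_def Suc_leI card_gt_0_iff empty_iff)
  then have L2: "2 \<le> Lr a b" using L by simp
  have "5 * W a b \<le> 15 * Lr a b - 10" using W_eq L by simp
  also have "\<dots> \<le> 4 + 4 * 2 ^ Lr a b" using nat_ineq[OF L2] by simp
  finally have "real (5 * W a b) \<le> real (4 + 4 * 2 ^ Lr a b)" by (metis of_nat_le_iff)
  then have "5 * real (W a b) \<le> 4 * (1 + 2 ^ Lr a b)" by simp
  then show ?thesis unfolding f_def by (simp add: divide_le_eq field_simps)
qed

lemma f_big: assumes "real (Lr a b) \<ge> LL / 2" shows "f a b \<le> eps"
proof -
  have "W a b \<le> 2 * card V" using W_le[of a b] card_V by linarith
  then have "real (W a b) \<le> 2 * nn" by (metis of_nat_le_iff of_nat_mult of_nat_numeral)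
  moreover have "2 powr (nn / 4) \<le> 1 + 2 ^ Lr a b"
  proof -
    have "2 powr (nn / 4) \<le> 2 powr (real (Lr a b))" using assms nL by (intro powr_mono) auto
    also have "\<dots> = 2 ^ Lr a b" by (simp add: powr_realpow)
    finally show ?thesis by simp
  qed
  moreover have "0 < 2 powr (nn / 4)" by simp
  ultimately show ?thesis unfolding f_def eps_def
    by (intro frac_le) auto
qed

lemma card_EI: "card EI = 2 * (card I - 1)"
  unfolding EI_def by (rule conn_edges[OF IV I_ne I_conn])

lemma kpos: "1 \<le> card I" using I_ne finI by (simp add: Suc_leI card_gt_0_iff)

lemma eps_nonneg: "0 \<le> eps" unfolding eps_def by simp

lemma pair_bound: assumes p: "p \<in> EI" shows "f (fst p) (snd p) + f (snd p) (fst p) \<le> 4/5 + eps"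
proof -
  obtain a b where ab: "p = (a,b)" by (cases p)
  have a: "a \<in> I" and b: "b \<in> I" and e: "(a,b) \<in> E" using p ab unfolding EI_def by auto
  have "card Lf \<le> Lr a b + Lr b a" by (rule Lr_sum[OF a b e])
  then have "LL \<le> real (Lr a b) + real (Lr b a)" by (metis of_nat_add of_nat_le_iff)
  then consider "real (Lr a b) \<ge> LL / 2" | "real (Lr b a) \<ge> LL / 2" by linarith
  then show ?thesis
  proof cases
    case 1 then show ?thesis using f_big[OF 1] f_small[OF b a Esym[OF e]] ab by simp
  next
    case 2 then show ?thesis using f_big[OF 2] f_small[OF a b e] ab by simp
  qed
qed

lemma sum_f: "(\<Sum>p\<in>EI. f (fst p) (snd p)) \<le> (kk - 1) * (4/5 + eps)"
proof -
  let ?h = "\<lambda>p. f (fst p) (snd p)"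
  have bij: "bij_betw (\<lambda>p. (snd p, fst p)) EI EI"
  proof -
    have "inj_on (\<lambda>p. (snd p, fst p)) EI" by (auto simp: inj_on_def prod_eq_iff)
    moreover have "(\<lambda>p. (snd p, fst p)) ` EI = EI"
    proof (intro equalityI subsetI)
      fix q assume "q \<in> (\<lambda>p. (snd p, fst p)) ` EI"
      then show "q \<in> EI" using Esym unfolding EI_def by auto
    next
      fix q assume q: "q \<in> EI"
      then have "(snd q, fst q) \<in> EI" using Esym unfolding EI_def by (cases q) auto
      then show "q \<in> (\<lambda>p. (snd p, fst p)) ` EI" by (rule rev_image_eqI) simp
    qed
    ultimately show ?thesis unfolding bij_betw_def by simp
  qed
  have "(\<Sum>p\<in>EI. ?h (snd p, fst p)) = (\<Sum>p\<in>EI. ?h p)" by (rule sum.reindex_bij_betw[OF bij])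
  then have "2 * (\<Sum>p\<in>EI. ?h p) = (\<Sum>p\<in>EI. ?h p + f (snd p) (fst p))" by (simp add: sum.distrib)
  also have "\<dots> \<le> (\<Sum>p\<in>EI. 4/5 + eps)" using pair_bound by (intro sum_mono) auto
  also have "\<dots> = real (card EI) * (4/5 + eps)" by simp
  also have "\<dots> = 2 * ((kk - 1) * (4/5 + eps))" using card_EI kpos by (simp add: of_nat_diff)
  finally show ?thesis by linarith
qed

lemma sum_Wc: "real (\<Sum>p\<in>EI. W (fst p) (snd p) * card {S \<in> Subs. fst p \<in> S \<and> snd p \<notin> S})
    \<le> real N * (\<Sum>p\<in>EI. f (fst p) (snd p))"
proof -
  have "real (W (fst p) (snd p) * card {S \<in> Subs. fst p \<in> S \<and> snd p \<notin> S}) \<le> real N * f (fst p) (snd p)"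
    if p: "p \<in> EI" for p
  proof -
    obtain a b where ab: "p = (a,b)" by (cases p)
    have a: "a \<in> I" and b: "b \<in> I" and e: "(a,b) \<in> E" using p ab unfolding EI_def by auto
    define c where "c = card {S \<in> Subs. a \<in> S \<and> b \<notin> S}"
    have "c * (1 + 2 ^ Lr a b) \<le> N" using C5[OF a b e] unfolding c_def .
    then have "real (c * (1 + 2 ^ Lr a b)) \<le> real N" by (simp only: of_nat_le_iff)
    then have "real c * (1 + 2 ^ Lr a b) \<le> real N" by (simp add: algebra_simps)
    moreover have pos: "0 < (1::real) + 2 ^ Lr a b" by (simp add: add_pos_nonneg)
    ultimately have "real c \<le> real N / (1 + 2 ^ Lr a b)" by (simp add: pos_le_divide_eq[OF pos])
    then have "real (W a b) * real c \<le> real (W a b) * (real N / (1 + 2 ^ Lr a b))" by (intro mult_left_mono) auto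
    then show ?thesis unfolding ab f_def c_def by (simp add: mult.commute)
  qed
  then have "(\<Sum>p\<in>EI. real (W (fst p) (snd p) * card {S \<in> Subs. fst p \<in> S \<and> snd p \<notin> S})) \<le> (\<Sum>p\<in>EI. real N * f (fst p) (snd p))"
    by (intro sum_mono) auto
  then show ?thesis by (simp add: sum_distrib_left)
qed

lemma lower_main: "real N * (nn + kk / 5 - 2 * nn * eps) \<le> 2 * real (\<Sum>S\<in>Subs. card S)"
proof -
  define Sg where "Sg = (\<Sum>u\<in>I. g u * cnt u)"
  define Mg where "Mg = (\<Sum>u\<in>I. g u * ncnt u)"
  define Q where "Q = (\<Sum>p\<in>EI. W (fst p) (snd p) * card {S \<in> Subs. fst p \<in> S \<and> snd p \<notin> S})"
  have "real Sg \<le> real (2 * (\<Sum>S\<in>Subs. card S))" using step2 unfolding Sg_def by (simp only: of_nat_le_iff)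
  then have A: "real Sg \<le> 2 * real (\<Sum>S\<in>Subs. card S)" by simp
  have B: "Sg + Mg = N * (2 * card I + card Lf)"
  proof -
    have "Sg + Mg = (\<Sum>u\<in>I. g u * (cnt u + ncnt u))" unfolding Sg_def Mg_def by (simp add: sum.distrib algebra_simps)
    also have "\<dots> = (\<Sum>u\<in>I. g u * N)" using cnt_ncnt by simp
    also have "\<dots> = N * (2 * card I + card Lf)" using sumg_I by (simp add: sum_distrib_right[symmetric])
    finally show ?thesis .
  qed
  have C: "Mg \<le> card Lf * (2 * card I + card Lf) + Q" using M_eq M_bound unfolding Mg_def Q_def by simp
  have D: "real Q \<le> real N * ((kk - 1) * (4/5 + eps))"
  proof -
    have "real N * (\<Sum>p\<in>EI. f (fst p) (snd p)) \<le> real N * ((kk - 1) * (4/5 + eps))"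
      using sum_f by (intro mult_left_mono) auto
    then show ?thesis using sum_Wc unfolding Q_def by linarith
  qed
  have E: "LL * (2 * kk + LL) \<le> real N * nn * eps"
  proof -
    have "LL * (2 * kk + LL) \<le> LL * (2 * nn)" using card_V by (intro mult_left_mono) auto
    moreover have "LL * 2 powr (nn / 4) \<le> nn * real N" using LN card_V by (intro mult_mono) auto
    then have "LL \<le> nn * real N / 2 powr (nn / 4)" by (simp add: le_divide_eq)
    then have "LL * (2 * nn) \<le> nn * real N / 2 powr (nn / 4) * (2 * nn)" by (intro mult_right_mono) auto
    moreover have "nn * real N / 2 powr (nn / 4) * (2 * nn) = real N * nn * eps" unfolding eps_def by simp
    ultimately show ?thesis by linarith
  qed
  have nkk: "kk \<le> nn" using card_V by simp
  have "real (Sg + Mg) = real (N * (2 * card I + card Lf))" using B by (simp only:)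
  then have "real Sg = real N * (2 * kk + LL) - real Mg" by simp
  moreover have "real Mg \<le> real (card Lf * (2 * card I + card Lf) + Q)" using C by (simp only: of_nat_le_iff)
  then have "real Mg \<le> LL * (2 * kk + LL) + real Q" by simp
  moreover have "real N * ((kk - 1) * (4/5 + eps)) \<le> real N * (kk * (4/5) + nn * eps)"
  proof (rule mult_left_mono)
    have "(kk - 1) * eps \<le> nn * eps" using nkk eps_nonneg by (intro mult_right_mono) auto
    moreover have "(kk - 1) * (4/5 + eps) = kk * (4/5) - 4/5 + (kk - 1) * eps" by (simp add: field_simps)
    ultimately show "(kk - 1) * (4/5 + eps) \<le> kk * (4/5) + nn * eps" by linarith
  qed simp
  ultimately have "real Sg \<ge> real N * (2 * kk + LL) - real N * nn * eps - real N * (kk * (4/5) + nn * eps)"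
    using D E by linarith
  moreover have "real N * (2 * kk + LL) - real N * nn * eps - real N * (kk * (4/5) + nn * eps) = real N * (nn + kk / 5 - 2 * nn * eps)"
    using card_V by (simp add: algebra_simps)
  ultimately show ?thesis using A by linarith
qed

lemma upper_main: "2 * real (\<Sum>S\<in>Subs. card S) \<le> real N * (nn + kk + 2)"
proof -
  have "card Lf < 2 ^ card Lf" by simp
  then have LN': "card Lf \<le> N" using C3 by linarith
  have "2 * (\<Sum>S\<in>Subs. card S) \<le> 2 * card I * N + card Lf * (N + 1)" by (rule upper_sum)
  also have "\<dots> \<le> N * (card V + card I + 2)" using LN' card_V by (simp add: algebra_simps)
  finally have "real (2 * (\<Sum>S\<in>Subs. card S)) \<le> real (N * (card V + card I + 2))" by (simp only: of_nat_le_iff)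
  then show ?thesis by (simp add: algebra_simps)
qed

lemma Npos: "0 < N" using C3 by (meson less_le_trans nat_zero_less_power_iff zero_less_numeral)
lemma npos: "0 < nn" using card_V_ge4 by simp

lemma dens_eq: "avg_subtree_density G = real (\<Sum>S\<in>Subs. card S) / real N / nn"
  unfolding avg_subtree_density_def mean_subtree_order_def Subs_def[symmetric] N_def[symmetric]
  by simp

lemma dens_lower: "1/2 + kk / (10 * nn) - eps \<le> avg_subtree_density G"
proof -
  have "real N * (nn + kk / 5 - 2 * nn * eps) / (real N * (2 * nn)) \<le> 2 * real (\<Sum>S\<in>Subs. card S) / (real N * (2 * nn))"
    using lower_main Npos npos by (intro divide_right_mono) auto
  moreover have "real N * (nn + kk / 5 - 2 * nn * eps) / (real N * (2 * nn)) = 1/2 + kk / (10 * nn) - eps"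
    using Npos npos by (simp add: field_simps)
  moreover have "2 * real (\<Sum>S\<in>Subs. card S) / (real N * (2 * nn)) = avg_subtree_density G"
    unfolding dens_eq using Npos npos by (simp add: field_simps)
  ultimately show ?thesis by simp
qed

lemma dens_upper: "avg_subtree_density G \<le> 1/2 + kk / (2 * nn) + 1 / nn"
proof -
  have "2 * real (\<Sum>S\<in>Subs. card S) / (real N * (2 * nn)) \<le> real N * (nn + kk + 2) / (real N * (2 * nn))"
    using upper_main Npos npos by (intro divide_right_mono) auto
  moreover have "real N * (nn + kk + 2) / (real N * (2 * nn)) = 1/2 + kk / (2 * nn) + 1 / nn"
    using Npos npos by (simp add: field_simps)
  moreover have "2 * real (\<Sum>S\<in>Subs. card S) / (real N * (2 * nn)) = avg_subtree_density G"
    unfolding dens_eq using Npos npos by (simp add: field_simps)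
  ultimately show ?thesis by simp
qed

end



lemma dens_bounds:
  assumes "T3 G"
  shows "1/2 + real (card (internal_verts G)) / (10 * real (card (verts G)))
           - 2 * real (card (verts G)) / 2 powr (real (card (verts G)) / 4) \<le> avg_subtree_density G"
    and "avg_subtree_density G \<le> 1/2 + real (card (internal_verts G)) / (2 * real (card (verts G))) + 1 / real (card (verts G))"
    and "card (verts G) = card (internal_verts G) + card (leaves G)"
    and "4 \<le> card (verts G)"
proof -
  interpret sr G by (rule sr.intro[OF assms])
  show "1/2 + real (card (internal_verts G)) / (10 * real (card (verts G)))
           - 2 * real (card (verts G)) / 2 powr (real (card (verts G)) / 4) \<le> avg_subtree_density G"
    using dens_lower unfolding eps_def I_def by simp
  show "avg_subtree_density G \<le> 1/2 + real (card (internal_verts G)) / (2 * real (card (verts G))) + 1 / real (card (verts G))"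
    using dens_upper unfolding I_def by simp
  show "card (verts G) = card (internal_verts G) + card (leaves G)" using card_V unfolding I_def Lf_def .
  show "4 \<le> card (verts G)" by (rule card_V_ge4)
qed

lemma iso_via_canon:
  assumes hi: "bij_betw h V A" and EV: "E \<subseteq> V \<times> V" and x: "x \<in> V" and y: "y \<in> V"
  shows "(x,y) \<in> E \<longleftrightarrow> (h x, h y) \<in> map_prod h h ` E"
proof
  assume "(x,y) \<in> E" then show "(h x, h y) \<in> map_prod h h ` E" by force
next
  assume "(h x, h y) \<in> map_prod h h ` E"
  then obtain a b where ab: "(a,b) \<in> E" "h x = h a" "h y = h b" by auto
  have "a \<in> V" "b \<in> V" using ab EV by auto
  then have "x = a" "y = b" using ab x y hi unfolding bij_betw_def inj_on_def by auto
  then show "(x,y) \<in> E" using ab by simp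
qed

lemma finite_size_class:
  fixes T :: "nat \<Rightarrow> graph"
  assumes T3: "\<And>i. T3 (T i)"
    and ni: "\<And>i j. i \<noteq> j \<Longrightarrow> \<not> graph_iso (T i) (T j)"
  shows "finite {i. card (verts (T i)) = m}"
proof (rule ccontr)
  assume inf: "infinite {i. card (verts (T i)) = m}"
  define J where "J = {i. card (verts (T i)) = m}"
  have fin: "finite (verts (T i))" for i using T3[of i] unfolding T3_def is_tree_def is_graph_def by auto
  have EVi: "edges (T i) \<subseteq> verts (T i) \<times> verts (T i)" for i
    using T3[of i] unfolding T3_def is_tree_def is_graph_def by auto
  define h where "h i = (SOME h. bij_betw h (verts (T i)) {0..<card (verts (T i))})" for i
  have hb: "bij_betw (h i) (verts (T i)) {0..<card (verts (T i))}" for i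
    unfolding h_def using ex_bij_betw_finite_nat[OF fin[of i]] by (rule someI_ex)
  define C where "C i = map_prod (h i) (h i) ` edges (T i)" for i
  have Csub: "C i \<subseteq> {0..<m} \<times> {0..<m}" if "i \<in> J" for i
    using that hb[of i] EVi[of i] unfolding C_def J_def bij_betw_def by auto
  have "C ` J \<subseteq> Pow ({0..<m} \<times> {0..<m})" using Csub by auto
  then have "finite (C ` J)" by (rule finite_subset) auto
  then have "\<not> inj_on C J" using inf unfolding J_def[symmetric] using finite_imageD by blast
  then obtain i j where ij: "i \<in> J" "j \<in> J" "i \<noteq> j" "C i = C j" unfolding inj_on_def by blast
  have mi: "card (verts (T i)) = m" and mj: "card (verts (T j)) = m" using ij unfolding J_def by auto
  define f where "f = inv_into (verts (T j)) (h j) \<circ> h i"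
  have hbj: "bij_betw (h j) (verts (T j)) {0..<m}" using hb[of j] mj by simp
  have hbi: "bij_betw (h i) (verts (T i)) {0..<m}" using hb[of i] mi by simp
  have bf: "bij_betw f (verts (T i)) (verts (T j))"
    unfolding f_def by (rule bij_betw_trans[OF hbi bij_betw_inv_into[OF hbj]])
  have "graph_iso (T i) (T j)"
    unfolding graph_iso_def
  proof (intro exI[of _ f] conjI ballI)
    show "bij_betw f (verts (T i)) (verts (T j))" by (rule bf)
    fix x y assume x: "x \<in> verts (T i)" and y: "y \<in> verts (T i)"
    have fx: "f x \<in> verts (T j)" "h j (f x) = h i x" using x hbi hbj bf unfolding f_def
      by (auto simp: bij_betw_def f_inv_into_f) (metis bij_betw_def bij_betw_imp_surj_on f_inv_into_f imageI)
    have fy: "f y \<in> verts (T j)" "h j (f y) = h i y" using y hbi hbj bf unfolding f_def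
      by (auto simp: bij_betw_def f_inv_into_f) (metis bij_betw_def bij_betw_imp_surj_on f_inv_into_f imageI)
    have "(x,y) \<in> edges (T i) \<longleftrightarrow> (h i x, h i y) \<in> C i"
      unfolding C_def by (rule iso_via_canon[OF hbi EVi x y])
    also have "\<dots> \<longleftrightarrow> (h j (f x), h j (f y)) \<in> C j" using ij(4) fx fy by simp
    also have "\<dots> \<longleftrightarrow> (f x, f y) \<in> edges (T j)"
      unfolding C_def by (rule iso_via_canon[OF hbj EVi fx(1) fy(1), symmetric])
    finally show "(x,y) \<in> edges (T i) \<longleftrightarrow> (f x, f y) \<in> edges (T j)" .
  qed
  then show False using ni ij(3) by blast
qed




theorem mainTheorem1:
  fixes T :: "nat \<Rightarrow> graph"
  assumes "\<And>i. T3 (T i)"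
    and "\<And>i j. i \<noteq> j \<Longrightarrow> \<not> graph_iso (T i) (T j)"
  shows "(\<lambda>i. avg_subtree_density (T i)) \<longlonglongrightarrow> 1/2 \<longleftrightarrow>
         (\<lambda>i. real (card (leaves (T i))) / real (card (verts (T i)))) \<longlonglongrightarrow> 1"
proof -
  define n where "n i = card (verts (T i))" for i
  define k where "k i = card (internal_verts (T i))" for i
  define D where "D i = avg_subtree_density (T i)" for i
  define r where "r i = real (k i) / real (n i)" for i
  define E0 where "E0 m = 2 * real m / 2 powr (real m / 4)" for m :: nat
  have npos: "0 < real (n i)" for i using dens_bounds(4)[OF assms(1)[of i]] unfolding n_def by simp
  have lo: "1/2 + r i / 10 - E0 (n i) \<le> D i" for i
  proof -
    have "real (k i) / (10 * real (n i)) = r i / 10" unfolding r_def by simp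
    then show ?thesis using dens_bounds(1)[OF assms(1)[of i]] unfolding D_def E0_def n_def k_def by simp
  qed
  have up: "D i \<le> 1/2 + r i / 2 + 1 / real (n i)" for i
  proof -
    have "real (k i) / (2 * real (n i)) = r i / 2" unfolding r_def by simp
    then show ?thesis using dens_bounds(2)[OF assms(1)[of i]] unfolding D_def n_def k_def by simp
  qed
  have xeq: "real (card (leaves (T i))) / real (card (verts (T i))) = 1 - r i" for i
  proof -
    have "real (n i) = real (k i) + real (card (leaves (T i)))"
      using dens_bounds(3)[OF assms(1)[of i]] unfolding n_def k_def by simp
    then show ?thesis using npos[of i] unfolding r_def n_def[symmetric] by (simp add: field_simps)
  qed
  have rnn: "0 \<le> r i" for i unfolding r_def by simp
  have nlim: "filterlim n at_top sequentially"
    unfolding filterlim_at_top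
  proof
    fix Z :: nat
    have "{i. n i < Z} = (\<Union>m<Z. {i. card (verts (T i)) = m})" unfolding n_def by auto
    then have "finite {i. n i < Z}" using finite_size_class[OF assms] by simp
    then obtain B where B: "\<forall>i\<in>{i. n i < Z}. i < B" using finite_nat_set_iff_bounded by blast
    show "eventually (\<lambda>i. Z \<le> n i) sequentially"
      unfolding eventually_sequentially
    proof (intro exI allI impI)
      fix i assume "B \<le> i"
      then show "Z \<le> n i" using B by (meson leD mem_Collect_eq not_le_imp_less)
    qed
  qed
  have E0lim: "E0 \<longlonglongrightarrow> 0"
  proof -
    define c :: real where "c = 2 powr (1/4)"
    have c1: "1 < norm c" unfolding c_def by simp
    have "E0 m = 2 * (of_nat m / c ^ m)" for m
    proof -
      have "c ^ m = 2 powr (real m / 4)" unfolding c_def by (simp add: powr_realpow[symmetric] powr_powr)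
      then show ?thesis unfolding E0_def by simp
    qed
    then have "E0 = (\<lambda>m. 2 * (of_nat m / c ^ m))" by auto
    moreover have "(\<lambda>m. 2 * (of_nat m / c ^ m)) \<longlonglongrightarrow> 2 * 0"
      by (intro tendsto_mult tendsto_const lim_n_over_pown[OF c1])
    ultimately show ?thesis by simp
  qed
  have elim: "(\<lambda>i. E0 (n i)) \<longlonglongrightarrow> 0" by (rule filterlim_compose[OF E0lim nlim])
  have ilim: "(\<lambda>i. 1 / real (n i)) \<longlonglongrightarrow> 0" by (rule filterlim_compose[OF lim_inverse_n' nlim])
  have "D \<longlonglongrightarrow> 1/2 \<longleftrightarrow> r \<longlonglongrightarrow> 0"
  proof
    assume DL: "D \<longlonglongrightarrow> 1/2"
    have h: "(\<lambda>i. 10 * (D i - 1/2 + E0 (n i))) \<longlonglongrightarrow> 10 * (1/2 - 1/2 + 0)"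
      by (intro tendsto_intros DL elim)
    show "r \<longlonglongrightarrow> 0"
    proof (rule tendsto_sandwich[of "\<lambda>_. 0" _ _ "\<lambda>i. 10 * (D i - 1/2 + E0 (n i))"])
      show "\<forall>\<^sub>F i in sequentially. 0 \<le> r i" using rnn by simp
      have p1: "r i \<le> 10 * (D i - 1/2 + E0 (n i))" for i using lo[of i] by (simp add: field_simps)
      show "\<forall>\<^sub>F i in sequentially. r i \<le> 10 * (D i - 1/2 + E0 (n i))" using p1 by (intro always_eventually) auto
      show "(\<lambda>_. 0) \<longlonglongrightarrow> (0::real)" by simp
      show "(\<lambda>i. 10 * (D i - 1/2 + E0 (n i))) \<longlonglongrightarrow> 0" using h by simp
    qed
  next
    assume RL: "r \<longlonglongrightarrow> 0"
    show "D \<longlonglongrightarrow> 1/2"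
    proof (rule tendsto_sandwich[of "\<lambda>i. 1/2 - E0 (n i)" _ _ "\<lambda>i. 1/2 + r i / 2 + 1 / real (n i)"])
      have p2: "1/2 - E0 (n i) \<le> D i" for i using lo[of i] rnn[of i] by linarith
      show "\<forall>\<^sub>F i in sequentially. 1/2 - E0 (n i) \<le> D i" using p2 by (intro always_eventually) auto
      show "\<forall>\<^sub>F i in sequentially. D i \<le> 1/2 + r i / 2 + 1 / real (n i)" using up by simp
      have "(\<lambda>i. 1/2 - E0 (n i)) \<longlonglongrightarrow> 1/2 - 0" by (intro tendsto_intros elim)
      then show "(\<lambda>i. 1/2 - E0 (n i)) \<longlonglongrightarrow> 1/2" by simp
      have "(\<lambda>i. 1/2 + r i / 2 + 1 / real (n i)) \<longlonglongrightarrow> 1/2 + 0/2 + 0" by (intro tendsto_intros RL ilim) auto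
      then show "(\<lambda>i. 1/2 + r i / 2 + 1 / real (n i)) \<longlonglongrightarrow> 1/2" by simp
    qed
  qed
  also have "\<dots> \<longleftrightarrow> (\<lambda>i. 1 - r i) \<longlonglongrightarrow> 1"
  proof
    assume "r \<longlonglongrightarrow> 0"
    then have "(\<lambda>i. 1 - r i) \<longlonglongrightarrow> 1 - 0" by (intro tendsto_intros)
    then show "(\<lambda>i. 1 - r i) \<longlonglongrightarrow> 1" by simp
  next
    assume "(\<lambda>i. 1 - r i) \<longlonglongrightarrow> 1"
    then have "(\<lambda>i. 1 - (1 - r i)) \<longlonglongrightarrow> 1 - 1" by (intro tendsto_intros)
    then show "r \<longlonglongrightarrow> 0" by simp
  qed
  finally show ?thesis unfolding D_def xeq .
qed



end
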